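(* Let $m\ge 4$ and let $K\ne\Delta_{[m]}$ be a simplicial complex on $[m]$ with $f_0(K)=f_0(K^\vee)=m$. If $\chi(\mathrm{Bier}(K))=m-1$, then $\mathrm{Bier}(K)$ is a weak suspension.
   Context: A simplicial complex $K$ on $[m]=\{1,\dots,m\}$ is a nonempty family of subsets of $[m]$ closed under taking subsets; $V(K)=\{i:\{i\}\in K\}$, $f_0(K)=|V(K)|$. $\Delta_{[m]}=2^{[m]}$. Let $[m']=\{1',\dots,m'\}$ be a disjoint copy of $[m]$, $I'=\{i':i\in I\}$. For $K\ne\Delta_{[m]}$ the Alexander dual $K^\vee$ is the complex on $[m']$ with $J'\in K^\vee$ iff $[m]\setminus J\notin K$. The Bier sphere $\mathrm{Bier}(K)$ is the complex on $[m]\sqcup[m']$ with faces $I\sqcup J'$, $I\in K$, $J'\in K^\vee$, $I\cap J=\varnothing$. The chromatic number $\chi(L)$ is the least number of colors in a map $c\colon V(L)\to C$ with $c(u)\ne c(v)$ whenever $\{u,v\}\in L$. A complex $L$ is a weak suspension if there exist distinct $a,b\in V(L)$ with $\{a,b\}\notin L$ such that each of $a,b$ forms an edge of $L$ with every vertex of $V(L)\setminus\{a,b\}$. *)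

theory Defs
  imports Main
begin

definition simplicial_complex :: "nat \<Rightarrow> nat set set \<Rightarrow> bool" where
  "simplicial_complex m K \<longleftrightarrow> K \<noteq> {} \<and> (\<forall>F\<in>K. F \<subseteq> {1..m}) \<and>
     (\<forall>F\<in>K. \<forall>G. G \<subseteq> F \<longrightarrow> G \<in> K)"

definition vertices :: "'v set set \<Rightarrow> 'v set" where
  "vertices L = {v. {v} \<in> L}"

definition full_simplex :: "nat \<Rightarrow> nat set set" where
  "full_simplex m = Pow {1..m}"

text \<open>Alexander dual, as a complex on the primed copy [m'], encoded as Inr ` [m].
  J' is a face iff [m] - J is not a face of K.\<close>
definition alexander_dual :: "nat \<Rightarrow> nat set set \<Rightarrow> (nat + nat) set set" where
  "alexander_dual m K = {Inr ` J | J. J \<subseteq> {1..m} \<and> {1..m} - J \<notin> K}"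

text \<open>Bier sphere on [m] disjoint-union [m'] (Inl i = i, Inr i = i').\<close>
definition bier :: "nat \<Rightarrow> nat set set \<Rightarrow> (nat + nat) set set" where
  "bier m K = {Inl ` I \<union> Inr ` J | I J. I \<in> K \<and> Inr ` J \<in> alexander_dual m K \<and> I \<inter> J = {}}"

definition proper_coloring :: "'v set set \<Rightarrow> ('v \<Rightarrow> 'c) \<Rightarrow> bool" where
  "proper_coloring L c \<longleftrightarrow>
     (\<forall>u\<in>vertices L. \<forall>v\<in>vertices L. {u, v} \<in> L \<and> u \<noteq> v \<longrightarrow> c u \<noteq> c v)"

definition chromatic_number :: "'v set set \<Rightarrow> nat" where
  "chromatic_number L =
     (LEAST k. \<exists>c :: 'v \<Rightarrow> nat. c ` vertices L \<subseteq> {..<k} \<and> proper_coloring L c)"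

definition weak_suspension :: "'v set set \<Rightarrow> bool" where
  "weak_suspension L \<longleftrightarrow>
     (\<exists>a\<in>vertices L. \<exists>b\<in>vertices L. a \<noteq> b \<and> {a, b} \<notin> L \<and>
        (\<forall>v\<in>vertices L - {a, b}. {a, v} \<in> L \<and> {b, v} \<in> L))"

end

theory Submission
  imports Defs
begin

lemma split_eq: "Inl ` I \<union> Inr ` J = Inl ` I' \<union> Inr ` J' \<longleftrightarrow> I = I' \<and> J = J'"
proof
  assume h: "Inl ` I \<union> Inr ` J = Inl ` I' \<union> Inr ` J'"
  have "I = {x. Inl x \<in> Inl ` I \<union> Inr ` J}" by auto
  also have "\<dots> = {x. Inl x \<in> Inl ` I' \<union> Inr ` J'}" using h by simp
  also have "\<dots> = I'" by auto
  finally have 1: "I = I'" .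
  have "J = {x. Inr x \<in> Inl ` I \<union> Inr ` J}" by auto
  also have "\<dots> = {x. Inr x \<in> Inl ` I' \<union> Inr ` J'}" using h by simp
  also have "\<dots> = J'" by auto
  finally show "I = I' \<and> J = J'" using 1 by simp
qed auto
lemma dual_mem: "Inr ` J \<in> alexander_dual m K \<longleftrightarrow> J \<subseteq> {1..m} \<and> {1..m} - J \<notin> K"
  unfolding alexander_dual_def by (auto simp: inj_image_eq_iff)
lemma bier_mem: "Inl ` I \<union> Inr ` J \<in> bier m K \<longleftrightarrow> I \<in> K \<and> J \<subseteq> {1..m} \<and> {1..m} - J \<notin> K \<and> I \<inter> J = {}"
  unfolding bier_def by (auto simp: split_eq dual_mem)

theorem mainTheorem8:
  fixes m :: nat and K :: "nat set set"
  assumes "m \<ge> 4"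
    and "simplicial_complex m K"
    and "K \<noteq> full_simplex m"
    and "card (vertices K) = m"
    and "card (vertices (alexander_dual m K)) = m"
    and "chromatic_number (bier m K) = m - 1"
  shows "weak_suspension (bier m K)"
proof -
  define X where "X = {1..m}"
  have finX: "finite X" and cardX: "card X = m" unfolding X_def by auto
  have Kne: "K \<noteq> {}" and Ksub: "\<And>F. F \<in> K \<Longrightarrow> F \<subseteq> X"
    and Kcl: "\<And>F G. F \<in> K \<Longrightarrow> G \<subseteq> F \<Longrightarrow> G \<in> K"
    using assms(2) unfolding simplicial_complex_def X_def by blast+
  have emptyK: "{} \<in> K" using Kne Kcl by blast
  have nfull: "X \<notin> K"
  proof
    assume "X \<in> K"
    hence "Pow X \<subseteq> K" using Kcl by blast
    moreover have "K \<subseteq> Pow X" using Ksub by blast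
    ultimately show False using assms(3) unfolding full_simplex_def X_def by auto
  qed
  have VK: "vertices K = X"
  proof -
    have "vertices K \<subseteq> X" using Ksub unfolding vertices_def by auto
    thus ?thesis using card_subset_eq[OF finX] cardX assms(4) by metis
  qed
  have VD: "X - {j} \<notin> K" if "j \<in> X" for j
  proof -
    have "vertices (alexander_dual m K) \<subseteq> Inr ` X"
    proof
      fix v assume "v \<in> vertices (alexander_dual m K)"
      hence "{v} \<in> alexander_dual m K" unfolding vertices_def by auto
      then obtain J where "{v} = Inr ` J" "J \<subseteq> X" unfolding alexander_dual_def X_def by auto
      thus "v \<in> Inr ` X" by auto
    qed
    moreover have "card (Inr ` X) = m" using cardX by (simp add: card_image)
    ultimately have "vertices (alexander_dual m K) = Inr ` X"
      using card_subset_eq[of "Inr ` X"] finX assms(5) by auto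
    hence "Inr ` {j} \<in> alexander_dual m K" using that unfolding vertices_def by auto
    thus ?thesis unfolding dual_mem X_def by auto
  qed
  have eLL: "{Inl i, Inl k} \<in> bier m K \<longleftrightarrow> {i,k} \<in> K" for i k
  proof -
    have "{Inl i, Inl k} = Inl ` {i,k} \<union> Inr ` ({}::nat set)" by auto
    thus ?thesis using bier_mem[of "{i,k}" "{}" m K] nfull unfolding X_def by auto
  qed
  have eRR: "{Inr i, Inr k} \<in> bier m K \<longleftrightarrow> X - {i,k} \<notin> K" if "i \<in> X" "k \<in> X" for i k
  proof -
    have "{Inr i, Inr k} = Inl ` ({}::nat set) \<union> Inr ` {i,k}" by auto
    thus ?thesis using bier_mem[of "{}" "{i,k}" m K] emptyK that unfolding X_def by auto
  qed
  have eLR: "{Inl i, Inr k} \<in> bier m K" if "i \<in> X" "k \<in> X" "i \<noteq> k" for i k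
  proof -
    have "{Inl i, Inr k} = Inl ` {i} \<union> Inr ` {k}" by auto
    moreover have "{i} \<in> K" using VK that unfolding vertices_def by auto
    ultimately show ?thesis using bier_mem[of "{i}" "{k}" m K] VD[of k] that unfolding X_def by auto
  qed
  have eLRi: "{Inl i, Inr i} \<notin> bier m K" for i
  proof -
    have "{Inl i, Inr i} = Inl ` {i} \<union> Inr ` {i}" by auto
    thus ?thesis using bier_mem[of "{i}" "{i}" m K] by auto
  qed
  have V: "vertices (bier m K) = Inl ` X \<union> Inr ` X"
  proof
    show "vertices (bier m K) \<subseteq> Inl ` X \<union> Inr ` X"
    proof
      fix v assume "v \<in> vertices (bier m K)"
      hence v: "{v} \<in> bier m K" unfolding vertices_def by auto
      show "v \<in> Inl ` X \<union> Inr ` X"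
      proof (cases v)
        case (Inl k)
        have "{v} = Inl ` {k} \<union> Inr ` ({}::nat set)" using Inl by auto
        hence "{k} \<in> K" using v bier_mem[of "{k}" "{}" m K] by auto
        thus ?thesis using Inl Ksub by auto
      next
        case (Inr k)
        have "{v} = Inl ` ({}::nat set) \<union> Inr ` {k}" using Inr by auto
        hence "{k} \<subseteq> X" using v bier_mem[of "{}" "{k}" m K] unfolding X_def by auto
        thus ?thesis using Inr by auto
      qed
    qed
    show "Inl ` X \<union> Inr ` X \<subseteq> vertices (bier m K)"
    proof
      fix v assume "v \<in> Inl ` X \<union> Inr ` X"
      then consider i where "i \<in> X" "v = Inl i" | i where "i \<in> X" "v = Inr i" by auto
      thus "v \<in> vertices (bier m K)"
      proof cases
        case 1
        have "{v} = Inl ` {i} \<union> Inr ` ({}::nat set)" using 1 by auto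
        moreover have "{i} \<in> K" using VK 1 unfolding vertices_def by auto
        ultimately show ?thesis using bier_mem[of "{i}" "{}" m K] nfull unfolding vertices_def X_def by auto
      next
        case 2
        have "{v} = Inl ` ({}::nat set) \<union> Inr ` {i}" using 2 by auto
        thus ?thesis using bier_mem[of "{}" "{i}" m K] emptyK VD[of i] 2 unfolding vertices_def X_def by auto
      qed
    qed
  qed
  have ex: "\<exists>k. \<exists>c :: nat + nat \<Rightarrow> nat. c ` vertices (bier m K) \<subseteq> {..<k} \<and> proper_coloring (bier m K) c"
  proof (intro exI conjI)
    let ?c = "case_sum (\<lambda>i. 2*i) (\<lambda>i. 2*i+1) :: nat + nat \<Rightarrow> nat"
    show "?c ` vertices (bier m K) \<subseteq> {..<2*m+2}" unfolding V X_def by auto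
    have "inj ?c" unfolding inj_def by (auto split: sum.splits; presburger)
    thus "proper_coloring (bier m K) ?c" unfolding proper_coloring_def inj_def by blast
  qed
  from LeastI_ex[OF ex] obtain c :: "nat + nat \<Rightarrow> nat" where
    cimg: "c ` vertices (bier m K) \<subseteq> {..<m-1}" and cprop: "proper_coloring (bier m K) c"
    using assms(6) unfolding chromatic_number_def by auto
  define cu where "cu = (\<lambda>i. c (Inl i))"
  define cp where "cp = (\<lambda>i. c (Inr i))"
  have F1: "{i,k} \<notin> K" if "i \<in> X" "k \<in> X" "i \<noteq> k" "cu i = cu k" for i k
    using cprop eLL[of i k] that V unfolding proper_coloring_def cu_def by auto
  have F2: "X - {i,k} \<in> K" if "i \<in> X" "k \<in> X" "i \<noteq> k" "cp i = cp k" for i k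
    using cprop eRR[of i k] that V unfolding proper_coloring_def cp_def by auto
  have F3: "cu i \<noteq> cp j" if "i \<in> X" "j \<in> X" "i \<noteq> j" for i j
    using cprop eLR[of i j] that V unfolding proper_coloring_def cu_def cp_def by auto
  have F4: False if "i \<in> X" "k \<in> X" "{i,k} \<notin> K" "X - {j,l} \<in> K" "i \<notin> {j,l}" "k \<notin> {j,l}" for i k j l
  proof -
    have "{i,k} \<subseteq> X - {j,l}" using that by auto
    thus False using Kcl that by blast
  qed
  define D where "D = {i \<in> X. cu i = cp i}"
  define W where "W = X - D"
  have DX: "D \<subseteq> X" and WX: "W \<subseteq> X" unfolding D_def W_def by auto
  have finD: "finite D" and finW: "finite W" using DX WX finX finite_subset by auto
  have img: "cu ` X \<union> cp ` X \<subseteq> {..<m-1}" using cimg V unfolding cu_def cp_def by auto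
  hence cardimg: "card (cu ` X \<union> cp ` X) \<le> m - 1"
    by (metis card_lessThan card_mono finite_lessThan)
  have d1: "cu ` W \<inter> cp ` W = {}"
  proof (rule ccontr)
    assume "cu ` W \<inter> cp ` W \<noteq> {}"
    then obtain i j where "i \<in> W" "j \<in> W" "cu i = cp j" by auto
    thus False using F3[of i j] unfolding W_def D_def by auto
  qed
  have d2: "(cu ` W \<union> cp ` W) \<inter> cu ` D = {}"
  proof (rule ccontr)
    assume "(cu ` W \<union> cp ` W) \<inter> cu ` D \<noteq> {}"
    then obtain i k where ik: "i \<in> W" "k \<in> D" "cu i = cu k \<or> cp i = cu k" by (auto, metis, metis)
    have "cu k = cp k" using ik unfolding D_def by auto
    thus False using ik F3[of i k] F3[of k i] unfolding W_def D_def by (cases "i = k") auto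
  qed
  have injD: "inj_on cu D"
  proof
    fix i k assume "i \<in> D" "k \<in> D" "cu i = cu k"
    thus "i = k" using F3[of i k] unfolding D_def by auto
  qed
  have "card (cu ` W \<union> cp ` W \<union> cu ` D) = card (cu ` W) + card (cp ` W) + card D"
    using d1 d2 finW finD card_image[OF injD] by (simp add: card_Un_disjoint)
  moreover have "cu ` W \<union> cp ` W \<union> cu ` D \<subseteq> cu ` X \<union> cp ` X" using DX WX by auto
  hence "card (cu ` W \<union> cp ` W \<union> cu ` D) \<le> card (cu ` X \<union> cp ` X)"
    using finX by (intro card_mono) auto
  moreover have "card D + card W = m" unfolding W_def using card_Diff_subset[OF finD DX] cardX
    card_mono[OF finX DX] by simp
  ultimately have main: "card (cu ` W) + card (cp ` W) + 1 \<le> card W" using cardimg assms(1) by linarith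
  hence Wne: "W \<noteq> {}" by auto
  have p1: "card (cu ` W) \<ge> 1" and q1: "card (cp ` W) \<ge> 1" using Wne finW
    by (auto simp: Suc_le_eq card_gt_0_iff)
  have "\<not> inj_on cu W" using main card_image[of cu W] by auto
  then obtain a1 b1 where ab1: "a1 \<in> W" "b1 \<in> W" "a1 \<noteq> b1" "cu a1 = cu b1" unfolding inj_on_def by auto
  have N1: "{a1,b1} \<notin> K" using F1 ab1 WX by auto
  have "\<not> inj_on cp W" using main card_image[of cp W] by auto
  then obtain a2 b2 where ab2: "a2 \<in> W" "b2 \<in> W" "a2 \<noteq> b2" "cp a2 = cp b2" unfolding inj_on_def by auto
  have C2: "X - {a2,b2} \<in> K" using F2 ab2 WX by auto
  have injU: "inj_on cu (W - {a2,b2})"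
  proof
    fix u v assume uv: "u \<in> W - {a2,b2}" "v \<in> W - {a2,b2}" "cu u = cu v"
    show "u = v"
    proof (rule ccontr)
      assume "u \<noteq> v"
      hence "{u,v} \<notin> K" using F1 uv WX by auto
      thus False using F4[of u v a2 b2] uv WX C2 by auto
    qed
  qed
  have injP: "inj_on cp (W - {a1,b1})"
  proof
    fix u v assume uv: "u \<in> W - {a1,b1}" "v \<in> W - {a1,b1}" "cp u = cp v"
    show "u = v"
    proof (rule ccontr)
      assume "u \<noteq> v"
      hence "X - {u,v} \<in> K" using F2 uv WX by auto
      thus False using F4[of a1 b1 u v] uv WX ab1 N1 by auto
    qed
  qed
  have c2a: "card (W - {a2,b2}) = card W - 2" using ab2 finW by (simp add: card_Diff_subset)
  have c2b: "card (W - {a1,b1}) = card W - 2" using ab1 finW by (simp add: card_Diff_subset)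
  have "card (cu ` (W - {a2,b2})) \<le> card (cu ` W)" using finW by (intro card_mono) auto
  hence pp: "card W - 2 \<le> card (cu ` W)" using card_image[OF injU] c2a by simp
  have "card (cp ` (W - {a1,b1})) \<le> card (cp ` W)" using finW by (intro card_mono) auto
  hence qq: "card W - 2 \<le> card (cp ` W)" using card_image[OF injP] c2b by simp
  have W3: "card W = 3" and pE: "card (cu ` W) = 1" and qE: "card (cp ` W) = 1"
    using main pp qq p1 q1 by linarith+
  obtain \<gamma> where g: "cu ` W = {\<gamma>}" using pE card_1_singletonE by blast
  obtain \<delta> where dl: "cp ` W = {\<delta>}" using qE card_1_singletonE by blast
  have two: "\<exists>x y. x \<in> W \<and> y \<in> W \<and> x \<noteq> y \<and> x \<noteq> k \<and> y \<noteq> k" for k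
  proof -
    obtain x y z where "W = {x,y,z}" "x \<noteq> y" "y \<noteq> z" "x \<noteq> z" using W3 card_3_iff by metis
    note h = this
    show ?thesis
    proof (cases "k = x")
      case True thus ?thesis using h by (intro exI[of _ y] exI[of _ z]) auto
    next
      case False
      show ?thesis
      proof (cases "k = y")
        case True thus ?thesis using h \<open>k \<noteq> x\<close> by (intro exI[of _ x] exI[of _ z]) auto
      next
        case False thus ?thesis using h \<open>k \<noteq> x\<close> by (intro exI[of _ x] exI[of _ y]) auto
      qed
    qed
  qed
  have "\<not> X \<subseteq> W"
  proof
    assume "X \<subseteq> W"
    hence "card X \<le> card W" using card_mono finW by blast
    thus False using cardX W3 assms(1) by simp
  qed
  then obtain i where iX: "i \<in> X" and iW: "i \<notin> W" by auto
  have A: "{i,k} \<in> K" if "k \<in> X" "k \<noteq> i" for k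
  proof (rule ccontr)
    assume nk: "{i,k} \<notin> K"
    obtain x y where xy: "x \<in> W" "y \<in> W" "x \<noteq> y" "x \<noteq> k" "y \<noteq> k" using two by blast
    have "cp x = cp y" using dl xy by (metis imageI singletonD)
    hence "X - {x,y} \<in> K" using F2 xy WX by auto
    thus False using F4[of i k x y] nk iX that xy iW by auto
  qed
  have B: "X - {i,k} \<notin> K" if "k \<in> X" "k \<noteq> i" for k
  proof
    assume nk: "X - {i,k} \<in> K"
    obtain x y where xy: "x \<in> W" "y \<in> W" "x \<noteq> y" "x \<noteq> k" "y \<noteq> k" using two by blast
    have "cu x = cu y" using g xy by (metis imageI singletonD)
    hence "{x,y} \<notin> K" using F1 xy WX by auto
    thus False using F4[of x y i k] nk iX that xy iW WX by auto
  qed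
  show ?thesis unfolding weak_suspension_def
  proof (rule bexI[of _ "Inl i"], rule bexI[of _ "Inr i"], intro conjI)
    show "Inl i \<in> vertices (bier m K)" using V iX by auto
    show "Inr i \<in> vertices (bier m K)" using V iX by auto
    show "Inl i \<noteq> Inr i" by simp
    show "{Inl i, Inr i} \<notin> bier m K" by (rule eLRi)
    show "\<forall>v\<in>vertices (bier m K) - {Inl i, Inr i}. {Inl i, v} \<in> bier m K \<and> {Inr i, v} \<in> bier m K"
    proof
    fix v assume v: "v \<in> vertices (bier m K) - {Inl i, Inr i}"
    then consider k where "k \<in> X" "k \<noteq> i" "v = Inl k" | k where "k \<in> X" "k \<noteq> i" "v = Inr k"
      using V by auto
    thus "{Inl i, v} \<in> bier m K \<and> {Inr i, v} \<in> bier m K"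
    proof cases
      case 1
      have "{Inr i, v} = {Inl k, Inr i}" using 1 by auto
      thus ?thesis using 1 eLL[of i k] A[of k] eLR[of k i] iX by auto
    next
      case 2
      thus ?thesis using eRR[of i k] B[of k] eLR[of i k] iX by auto
    qed
    qed
  qed
qed

end
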